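(* Assume (V), (G1)–(G5). There is a constant $c>0$ such that for all $u\in E_{2,\mu}$, $$\int_{\mathbb R^N}G(x,u)\,dx\ \ge\ c\,\min\{|u|_{2,\mu}^2,\ |u|_{2,\mu}^\mu\}.$$
   Context: Let $N\ge1$, $2^*=\frac{2N}{N-2}$ if $N\ge3$, $2^*=\infty$ otherwise. $S=-\Delta+V$ with domain $H^2(\mathbb R^N)$; $G(x,u)=\int_0^ug(x,s)ds$. (V) $V\in C(\mathbb R^N,\mathbb R)$ 1-periodic in each $x_i$, $0\in\sigma(S)$, $(0,\beta]\cap\sigma(S)=\emptyset$ for some $\beta>0$. (G1) $g\in C(\mathbb R^N\times\mathbb R,\mathbb R)$ 1-periodic in each $x_i$. (G2) There are $a>0$, $2<\mu\le p<2^*$ with $|g(x,u)|\le a(|u|^{\mu-1}+|u|^{p-1})$. (G3) There is $b>0$ with $G(x,u)\ge b|u|^\mu$ for $|u|\le1$. (G4) $G(x,u)/|u|^2\to\infty$ uniformly in $x$ as $|u|\to\infty$. (G5) $u\mapsto g(x,u)/|u|$ strictly increasing on $(-\infty,0)$ and $(0,\infty)$. Spaces: $(P_\lambda)$ spectral family of $S$, $E^+=H^1\cap(\mathrm{id}-P_0)L^2$, $E'=H^1\cap P_0L^2$, $\|u\|_E^2=\int|\lambda|d|P_\lambda u|_2^2$; $L^{2,\mu}=L^2+L^\mu$ with norm $|v|_{2,\mu}=\inf\{|v_1|_2+|v_2|_\mu:v=v_1+v_2\}$; $E'_{2,\mu}$ the completion of $E'$ w.r.t. $(\|\cdot\|_E^2+|\cdot|_{2,\mu}^2)^{1/2}$;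 $E_{2,\mu}=E^+\oplus E'_{2,\mu}$ (continuously embedded in $L^{2,\mu}$). *)

theory Defs
  imports "HOL-Analysis.Analysis"
begin

definition prim :: "('x \<Rightarrow> real \<Rightarrow> real) \<Rightarrow> 'x \<Rightarrow> real \<Rightarrow> real" where
  "prim g x u = (if 0 \<le> u then integral {0..u} (g x) else - integral {u..0} (g x))"

definition in_Lp :: "real \<Rightarrow> ('a::euclidean_space \<Rightarrow> real) \<Rightarrow> bool" where
  "in_Lp q f \<longleftrightarrow> f \<in> borel_measurable lborel \<and> integrable lborel (\<lambda>x. \<bar>f x\<bar> powr q)"

definition Lp_norm :: "real \<Rightarrow> ('a::euclidean_space \<Rightarrow> real) \<Rightarrow> real" where
  "Lp_norm q f = (\<integral>x. \<bar>f x\<bar> powr q \<partial>lborel) powr (1 / q)"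

definition in_L2mu :: "real \<Rightarrow> ('a::euclidean_space \<Rightarrow> real) \<Rightarrow> bool" where
  "in_L2mu \<mu> v \<longleftrightarrow> (\<exists>v1 v2. in_Lp 2 v1 \<and> in_Lp \<mu> v2 \<and> (\<forall>x. v x = v1 x + v2 x))"

definition L2mu_norm :: "real \<Rightarrow> ('a::euclidean_space \<Rightarrow> real) \<Rightarrow> real" where
  "L2mu_norm \<mu> v = Inf {Lp_norm 2 v1 + Lp_norm \<mu> v2 | v1 v2.
      in_Lp 2 v1 \<and> in_Lp \<mu> v2 \<and> (\<forall>x. v x = v1 x + v2 x)}"

end

theory Submission
  imports Defs
begin


lemma pos_quad:
  fixes f :: "real \<Rightarrow> real" and b u :: real
  assumes cont: "continuous_on UNIV f" and f0: "f 0 = 0"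
    and mono: "strict_mono_on {0<..} (\<lambda>u. f u / \<bar>u\<bar>)"
    and b: "integral {0..1} f \<ge> b" and u: "u \<ge> 1"
  shows "integral {0..u} f \<ge> b * u\<^sup>2"
proof -
  have int: "\<And>a c. f integrable_on {a..c}"
    by (rule integrable_continuous_real) (use cont continuous_on_subset in blast)
  have l1: "f s \<le> s * f 1" if "0 \<le> s" "s \<le> 1" for s
  proof (cases "s = 0 \<or> s = 1")
    case True then show ?thesis using f0 by auto
  next
    case False
    have "f s / \<bar>s\<bar> < f 1 / \<bar>1\<bar>"
      by (rule strict_mono_onD[OF mono]) (use that False in auto)
    with False that show ?thesis by (simp add: field_simps)
  qed
  have l2: "f s \<ge> s * f 1" if "1 \<le> s" for s
  proof (cases "s = 1")
    case True then show ?thesis by auto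
  next
    case False
    have "f 1 / \<bar>1\<bar> < f s / \<bar>s\<bar>"
      by (rule strict_mono_onD[OF mono]) (use that False in auto)
    with False that show ?thesis by (simp add: field_simps)
  qed
  define I where "I = integral {0..1} f"
  have "I \<le> integral {0..1} (\<lambda>s. s * f 1)"
    unfolding I_def by (rule integral_le[OF int]) (auto intro!: integrable_continuous_real continuous_intros l1)
  then have h1: "I \<le> f 1 / 2" by simp
  have "integral {1..u} (\<lambda>s. s * f 1) \<le> integral {1..u} f"
    by (rule integral_le[OF _ int]) (auto intro!: integrable_continuous_real continuous_intros l2)
  then have h2: "f 1 * (u\<^sup>2 - 1) / 2 \<le> integral {1..u} f" using u by (simp add: mult.commute)
  have "integral {0..u} f = I + integral {1..u} f"
    unfolding I_def using Henstock_Kurzweil_Integration.integral_combine[where a=0 and c=1 and b=u and f=f] int u by simp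
  also have "\<dots> \<ge> I * u\<^sup>2"
  proof -
    have "u\<^sup>2 - 1 \<ge> 0" using u by (simp add: one_le_power)
    then have "I * (u\<^sup>2 - 1) \<le> f 1 / 2 * (u\<^sup>2 - 1)" using h1 by (rule mult_right_mono[rotated])
    then show ?thesis using h2 by (simp add: algebra_simps)
  qed
  also have "I * u\<^sup>2 \<ge> b * u\<^sup>2" using b I_def by (simp add: mult_right_mono)
  finally show ?thesis by simp
qed

lemma prim_lower:
  fixes g :: "'x \<Rightarrow> real \<Rightarrow> real"
  assumes cont: "continuous_on UNIV (g x)" and g0: "g x 0 = 0"
    and G3: "\<And>u. \<bar>u\<bar> \<le> 1 \<Longrightarrow> prim g x u \<ge> b * \<bar>u\<bar> powr \<mu>"
    and G5: "strict_mono_on {0<..} (\<lambda>u. g x u / \<bar>u\<bar>) \<and>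
                  strict_mono_on {..<0} (\<lambda>u. g x u / \<bar>u\<bar>)"
    and u: "\<bar>u\<bar> > 1"
  shows "prim g x u \<ge> b * u\<^sup>2"
proof (cases "u \<ge> 0")
  case True
  have "b \<le> integral {0..1} (g x)" using G3[of 1] by (simp add: prim_def)
  then have "b * u\<^sup>2 \<le> integral {0..u} (g x)"
    using pos_quad[OF cont g0 conjunct1[OF G5]] u True by auto
  then show ?thesis using True by (simp add: prim_def)
next
  case False
  define f where "f s = - g x (-s)" for s
  have cf: "continuous_on UNIV f" unfolding f_def
    by (intro continuous_intros continuous_on_compose2[OF cont]) auto
  have mf: "strict_mono_on {0<..} (\<lambda>u. f u / \<bar>u\<bar>)"
  proof (rule strict_mono_onI)
    fix r s :: real assume rs: "r \<in> {0<..}" "s \<in> {0<..}" "r < s"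
    have "g x (-s) / \<bar>-s\<bar> < g x (-r) / \<bar>-r\<bar>"
      by (rule strict_mono_onD[OF conjunct2[OF G5]]) (use rs in auto)
    then show "f r / \<bar>r\<bar> < f s / \<bar>s\<bar>" using rs by (simp add: f_def)
  qed
  have refl: "integral {0..t} f = - integral {-t..0} (g x)" for t
  proof -
    have "integral {0..t} f = - integral {-0..-(-t)} (\<lambda>s. g x (-s))"
    proof -
      have "f = (\<lambda>s. - g x (-s))" by (rule ext) (simp add: f_def)
      then show ?thesis by (simp only: integral_neg minus_zero minus_minus)
    qed
    also have "\<dots> = - integral {-t..0} (g x)"
      by (simp only: Henstock_Kurzweil_Integration.integral_reflect_real)
    finally show ?thesis .
  qed
  have f0: "f 0 = 0" by (simp add: f_def g0)
  have "b \<le> integral {0..1} f" using G3[of "-1"] by (simp add: prim_def refl)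
  then have "b * (-u)\<^sup>2 \<le> integral {0..-u} f"
    using pos_quad[OF cf f0 mf, of b "-u"] u False by simp
  then show ?thesis using False by (simp add: prim_def refl)
qed



lemma abs_powr2: "\<bar>v::real\<bar> powr 2 = v\<^sup>2"
  by (cases "v = 0") (simp_all add: powr_numeral)

lemma bound_big:
  fixes u v1 v2 \<mu> :: real
  assumes "u = v1 + v2" "\<mu> > 2" "\<bar>u\<bar> > 1"
  shows "u\<^sup>2 \<le> 4 * \<bar>v1\<bar> powr 2 + 2 powr \<mu> * \<bar>v2\<bar> powr \<mu>"
proof (cases "\<bar>v1\<bar> \<ge> \<bar>v2\<bar>")
  case True
  then have "\<bar>u\<bar> \<le> 2 * \<bar>v1\<bar>" using assms by auto
  then have "\<bar>u\<bar>\<^sup>2 \<le> (2 * \<bar>v1\<bar>)\<^sup>2" by (rule power_mono) simp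
  then have "u\<^sup>2 \<le> 4 * \<bar>v1\<bar> powr 2" by (simp add: abs_powr2 power_mult_distrib)
  moreover have "0 \<le> 2 powr \<mu> * \<bar>v2\<bar> powr \<mu>" by simp
  ultimately show ?thesis by linarith
next
  case False
  then have h: "\<bar>u\<bar> \<le> 2 * \<bar>v2\<bar>" using assms by auto
  then have w: "1 \<le> 2 * \<bar>v2\<bar>" using assms by auto
  have "u\<^sup>2 = \<bar>u\<bar> powr 2" by (simp add: abs_powr2)
  also have "\<dots> \<le> (2 * \<bar>v2\<bar>) powr 2" by (rule powr_mono2) (use h in auto)
  also have "\<dots> \<le> (2 * \<bar>v2\<bar>) powr \<mu>" by (rule powr_mono) (use w assms in auto)
  also have "\<dots> = 2 powr \<mu> * \<bar>v2\<bar> powr \<mu>" by (simp add: powr_mult)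
  finally have "u\<^sup>2 \<le> 2 powr \<mu> * \<bar>v2\<bar> powr \<mu>" .
  moreover have "0 \<le> 4 * \<bar>v1\<bar> powr 2" by simp
  ultimately show ?thesis by linarith
qed

lemma bound_small:
  fixes u v1 v2 \<mu> :: real
  assumes "u = v1 + v2" "\<mu> > 2" "\<bar>u\<bar> \<le> 1"
  shows "\<bar>u\<bar> powr \<mu> \<le> 4 * \<bar>v1\<bar> powr 2 + 2 powr \<mu> * \<bar>v2\<bar> powr \<mu>"
proof (cases "\<bar>v1\<bar> \<le> \<bar>v2\<bar>")
  case True
  then have h: "\<bar>u\<bar> \<le> 2 * \<bar>v2\<bar>" using assms by auto
  have "\<bar>u\<bar> powr \<mu> \<le> (2 * \<bar>v2\<bar>) powr \<mu>" by (rule powr_mono2) (use h assms in auto)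
  also have "\<dots> = 2 powr \<mu> * \<bar>v2\<bar> powr \<mu>" by (simp add: powr_mult)
  finally have "\<bar>u\<bar> powr \<mu> \<le> 2 powr \<mu> * \<bar>v2\<bar> powr \<mu>" .
  moreover have "0 \<le> 4 * \<bar>v1\<bar> powr 2" by simp
  ultimately show ?thesis by linarith
next
  case False
  then have h: "\<bar>u\<bar> \<le> 2 * \<bar>v1\<bar>" using assms by auto
  have "\<bar>u\<bar> powr \<mu> \<le> \<bar>u\<bar> powr 2" by (rule powr_mono') (use assms in auto)
  also have "\<dots> \<le> (2 * \<bar>v1\<bar>) powr 2" by (rule powr_mono2) (use h in auto)
  also have "\<dots> = 4 * \<bar>v1\<bar> powr 2" by (simp add: powr_mult)
  finally have "\<bar>u\<bar> powr \<mu> \<le> 4 * \<bar>v1\<bar> powr 2" .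
  moreover have "0 \<le> 2 powr \<mu> * \<bar>v2\<bar> powr \<mu>" by simp
  ultimately show ?thesis by linarith
qed

lemma final_ineq:
  fixes n A B \<mu> :: real
  assumes "n \<ge> 0" "A \<ge> 0" "B \<ge> 0" "\<mu> > 2" "n \<le> sqrt A + B powr (1/\<mu>)"
  shows "min (n\<^sup>2) (n powr \<mu>) \<le> (4 + 2 powr \<mu>) * (A + B)"
proof (cases "sqrt A \<ge> B powr (1/\<mu>)")
  case True
  then have "n \<le> 2 * sqrt A" using assms by linarith
  then have "n\<^sup>2 \<le> (2 * sqrt A)\<^sup>2" by (rule power_mono) (use assms in auto)
  then have "n\<^sup>2 \<le> 4 * A" using assms by (simp add: power_mult_distrib)
  moreover have "4 * A \<le> (4 + 2 powr \<mu>) * (A + B)" using assms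
    by (simp add: algebra_simps add_nonneg_nonneg mult_nonneg_nonneg)
  ultimately show ?thesis by linarith
next
  case False
  then have h: "n \<le> 2 * B powr (1/\<mu>)" using assms by linarith
  have "n powr \<mu> \<le> (2 * B powr (1/\<mu>)) powr \<mu>" by (rule powr_mono2) (use h assms in auto)
  also have "\<dots> = 2 powr \<mu> * B" using assms by (simp add: powr_mult powr_powr)
  finally have "n powr \<mu> \<le> 2 powr \<mu> * B" .
  moreover have "2 powr \<mu> * B \<le> (4 + 2 powr \<mu>) * (A + B)" using assms
    by (simp add: algebra_simps add_nonneg_nonneg mult_nonneg_nonneg)
  ultimately show ?thesis by linarith
qed


theorem lemma4p1:
  fixes g :: "real^'n \<Rightarrow> real \<Rightarrow> real" and a b \<mu> p :: real
  assumes G1_cont: "continuous_on UNIV (\<lambda>(x, u). g x u)"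
    and G1_per: "\<And>x u i. g (x + axis i 1) u = g x u"
    and G2_a: "a > 0" and G2_mu: "2 < \<mu>" "\<mu> \<le> p"
    and G2_crit: "CARD('n) \<ge> 3 \<Longrightarrow> p < 2 * real CARD('n) / (real CARD('n) - 2)"
    and G2: "\<And>x u. \<bar>g x u\<bar> \<le> a * (\<bar>u\<bar> powr (\<mu> - 1) + \<bar>u\<bar> powr (p - 1))"
    and G3_b: "b > 0"
    and G3: "\<And>x u. \<bar>u\<bar> \<le> 1 \<Longrightarrow> prim g x u \<ge> b * \<bar>u\<bar> powr \<mu>"
    and G4: "\<And>M. \<exists>R. \<forall>x u. \<bar>u\<bar> \<ge> R \<longrightarrow> prim g x u / u\<^sup>2 \<ge> M"
    and G5: "\<And>x. strict_mono_on {0<..} (\<lambda>u. g x u / \<bar>u\<bar>) \<and>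
                  strict_mono_on {..<0} (\<lambda>u. g x u / \<bar>u\<bar>)"
  shows "\<exists>c>0. \<forall>u. in_L2mu \<mu> u \<longrightarrow>
           (\<integral>\<^sup>+ x. ennreal (prim g x (u x)) \<partial>lborel)
             \<ge> ennreal (c * min ((L2mu_norm \<mu> u)\<^sup>2) ((L2mu_norm \<mu> u) powr \<mu>))"
proof -
  have g0: "g x 0 = 0" for x using G2[of x 0] G2_a G2_mu by simp
  have gc: "continuous_on UNIV (g x)" for x
  proof -
    have "continuous_on UNIV (\<lambda>s. (\<lambda>(x, u). g x u) (x, s))"
      by (rule continuous_on_compose2[OF G1_cont]) (auto intro!: continuous_intros)
    then show ?thesis by simp
  qed
  have big: "prim g x u \<ge> b * u\<^sup>2" if "\<bar>u\<bar> > 1" for x u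
    by (rule prim_lower[OF gc g0 G3 G5 that])
  define C where "C = 4 + 2 powr \<mu>"
  have Cpos: "C > 0" unfolding C_def by (simp add: add_pos_nonneg)
  define c where "c = b / C"
  have cpos: "c > 0" unfolding c_def using Cpos G3_b by simp
  show ?thesis
  proof (intro exI[of _ c] conjI allI impI cpos)
    fix u :: "real^'n \<Rightarrow> real"
    assume "in_L2mu \<mu> u"
    then obtain v1 v2 where v1: "in_Lp 2 v1" and v2: "in_Lp \<mu> v2" and uv: "\<And>x. u x = v1 x + v2 x"
      unfolding in_L2mu_def by blast
    have v1m: "v1 \<in> borel_measurable lborel" and v1i: "integrable lborel (\<lambda>x. \<bar>v1 x\<bar> powr 2)"
      using v1 by (auto simp: in_Lp_def)
    have v2m: "v2 \<in> borel_measurable lborel" and v2i: "integrable lborel (\<lambda>x. \<bar>v2 x\<bar> powr \<mu>)"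
      using v2 by (auto simp: in_Lp_def)
    have um: "u \<in> borel_measurable lborel"
    proof -
      have "u = (\<lambda>x. v1 x + v2 x)" using uv by auto
      then show ?thesis using v1m v2m by simp
    qed
    define K where "K x = 4 * \<bar>v1 x\<bar> powr 2 + 2 powr \<mu> * \<bar>v2 x\<bar> powr \<mu>" for x
    have Ki: "integrable lborel K" unfolding K_def using v1i v2i by simp
    have K0: "K x \<ge> 0" for x unfolding K_def by simp
    define u1 where "u1 x = (if \<bar>u x\<bar> > 1 then u x else 0)" for x
    define u2 where "u2 x = (if \<bar>u x\<bar> > 1 then 0 else u x)" for x
    have u1m: "u1 \<in> borel_measurable lborel" unfolding u1_def using um by measurable
    have u2m: "u2 \<in> borel_measurable lborel" unfolding u2_def using um by measurable
    have b1: "\<bar>u1 x\<bar> powr 2 \<le> K x" for x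
      using bound_big[OF uv G2_mu(1)] K0[of x] unfolding u1_def K_def by (auto simp: abs_powr2)
    have b2: "\<bar>u2 x\<bar> powr \<mu> \<le> K x" for x
      using bound_small[OF uv G2_mu(1)] K0[of x] unfolding u2_def K_def by auto
    have i1: "integrable lborel (\<lambda>x. \<bar>u1 x\<bar> powr 2)"
      by (rule Bochner_Integration.integrable_bound[OF Ki]) (use u1m b1 K0 in auto)
    have i2: "integrable lborel (\<lambda>x. \<bar>u2 x\<bar> powr \<mu>)"
      by (rule Bochner_Integration.integrable_bound[OF Ki]) (use u2m b2 K0 in auto)
    have L1: "in_Lp 2 u1" using u1m i1 by (simp add: in_Lp_def)
    have L2: "in_Lp \<mu> u2" using u2m i2 by (simp add: in_Lp_def)
    define A where "A = (\<integral>x. \<bar>u1 x\<bar> powr 2 \<partial>lborel)"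
    define B where "B = (\<integral>x. \<bar>u2 x\<bar> powr \<mu> \<partial>lborel)"
    have A0: "A \<ge> 0" unfolding A_def by simp
    have B0: "B \<ge> 0" unfolding B_def by simp
    define S where "S = {Lp_norm 2 w1 + Lp_norm \<mu> w2 | w1 w2.
      in_Lp 2 w1 \<and> in_Lp \<mu> w2 \<and> (\<forall>x. u x = w1 x + w2 x)}"
    have n_def: "L2mu_norm \<mu> u = Inf S" unfolding S_def L2mu_norm_def ..
    have Snn: "s \<ge> 0" if "s \<in> S" for s
      using that unfolding S_def Lp_norm_def by auto
    have inS: "Lp_norm 2 u1 + Lp_norm \<mu> u2 \<in> S"
      unfolding S_def using L1 L2 by (force simp: u1_def u2_def)
    have n0: "L2mu_norm \<mu> u \<ge> 0"
      unfolding n_def using inS Snn by (intro cInf_greatest) auto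
    have nle: "L2mu_norm \<mu> u \<le> sqrt A + B powr (1/\<mu>)"
    proof -
      have "L2mu_norm \<mu> u \<le> Lp_norm 2 u1 + Lp_norm \<mu> u2"
        unfolding n_def using inS Snn by (intro cInf_lower) (auto intro!: bdd_belowI[of S 0])
      also have "\<dots> = sqrt A + B powr (1/\<mu>)"
        unfolding Lp_norm_def A_def B_def using A0 A_def by (simp add: powr_half_sqrt)
      finally show ?thesis .
    qed
    have fin: "min ((L2mu_norm \<mu> u)\<^sup>2) ((L2mu_norm \<mu> u) powr \<mu>) \<le> C * (A + B)"
      unfolding C_def by (rule final_ineq[OF n0 A0 B0 G2_mu(1) nle])
    have pt: "b * (\<bar>u1 x\<bar> powr 2 + \<bar>u2 x\<bar> powr \<mu>) \<le> prim g x (u x)" for x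
    proof (cases "\<bar>u x\<bar> > 1")
      case True
      then show ?thesis using big[OF True, of x] G2_mu by (simp add: u1_def u2_def abs_powr2)
    next
      case False
      then show ?thesis using G3[of "u x" x] G2_mu by (simp add: u1_def u2_def)
    qed
    have "ennreal (c * min ((L2mu_norm \<mu> u)\<^sup>2) ((L2mu_norm \<mu> u) powr \<mu>)) \<le> ennreal (b * (A + B))"
    proof (rule ennreal_leI)
      have "c * min ((L2mu_norm \<mu> u)\<^sup>2) ((L2mu_norm \<mu> u) powr \<mu>) \<le> c * (C * (A + B))"
        using fin cpos by (intro mult_left_mono) auto
      also have "\<dots> = b * (A + B)" unfolding c_def using Cpos by simp
      finally show "c * min ((L2mu_norm \<mu> u)\<^sup>2) ((L2mu_norm \<mu> u) powr \<mu>) \<le> b * (A + B)" .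
    qed
    also have "ennreal (b * (A + B)) = (\<integral>\<^sup>+ x. ennreal (b * (\<bar>u1 x\<bar> powr 2 + \<bar>u2 x\<bar> powr \<mu>)) \<partial>lborel)"
    proof -
      have "(\<integral>\<^sup>+ x. ennreal (b * (\<bar>u1 x\<bar> powr 2 + \<bar>u2 x\<bar> powr \<mu>)) \<partial>lborel)
          = ennreal (\<integral>x. b * (\<bar>u1 x\<bar> powr 2 + \<bar>u2 x\<bar> powr \<mu>) \<partial>lborel)"
        by (rule nn_integral_eq_integral) (use i1 i2 G3_b in auto)
      also have "(\<integral>x. b * (\<bar>u1 x\<bar> powr 2 + \<bar>u2 x\<bar> powr \<mu>) \<partial>lborel) = b * (A + B)"
        unfolding A_def B_def using i1 i2 by simp
      finally show ?thesis by simp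
    qed
    also have "\<dots> \<le> (\<integral>\<^sup>+ x. ennreal (prim g x (u x)) \<partial>lborel)"
      by (intro nn_integral_mono ennreal_leI pt)
    finally show "(\<integral>\<^sup>+ x. ennreal (prim g x (u x)) \<partial>lborel)
             \<ge> ennreal (c * min ((L2mu_norm \<mu> u)\<^sup>2) ((L2mu_norm \<mu> u) powr \<mu>))" .
  qed
qed

end
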